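(* Consider a single-machine instance as defined in the context in which all jobs have the same weight ($w_j=w_k$ for all $j,k\in J$). Then the schedule produced by the WSPT rule, i.e. any schedule that orders the jobs in nondecreasing order of $p_j/w_j$ (equivalently, nondecreasing processing time), is optimal.
   Context: An instance consists of a finite set $J$ of jobs, each job $j$ having a processing time $p_j>0$ and a weight $w_j>0$, a common deadline $d\ge 0$, and a single machine. A schedule is a sequence $\pi$ containing every job of $J$ exactly once, processed consecutively without idle time starting at time $0$: the start time of job $j$ is $S_j=\sum_{k \text{ before } j \text{ in } \pi} p_k$ and its completion time is $C_j=S_j+p_j$. Let $J_{\mathrm{pri}}(\pi)=\{j : S_j<d\}$ and $J_{\mathrm{late}}(\pi)=\{j: S_j\ge d\}$. The cost of $\pi$ is $$\phi(\pi)=\sum_{j\in J_{\mathrm{pri}}(\pi)} w_j p_j+\sum_{j\in J_{\mathrm{late}}(\pi)} w_j\,(C_j-d),$$ and $\pi$ is optimal if $\phi(\pi)$ is minimal over all schedules of $J$. (This models total weighted flowtime minimization where each release date $r_j\le d$ is a decision variable.) *)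

theory Defs
  imports Main "HOL-Library.Multiset" Complex_Main
begin

definition is_schedule :: "'a set \<Rightarrow> 'a list \<Rightarrow> bool" where
  "is_schedule J \<pi> \<longleftrightarrow> distinct \<pi> \<and> set \<pi> = J"

definition start_time :: "('a \<Rightarrow> real) \<Rightarrow> 'a list \<Rightarrow> nat \<Rightarrow> real" where
  "start_time p \<pi> k = sum_list (map p (take k \<pi>))"

definition completion_time :: "('a \<Rightarrow> real) \<Rightarrow> 'a list \<Rightarrow> nat \<Rightarrow> real" where
  "completion_time p \<pi> k = start_time p \<pi> k + p (\<pi> ! k)"

definition cost :: "('a \<Rightarrow> real) \<Rightarrow> ('a \<Rightarrow> real) \<Rightarrow> real \<Rightarrow> 'a list \<Rightarrow> real" where
  "cost p w d \<pi> = (\<Sum>k<length \<pi>.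
      if start_time p \<pi> k < d then w (\<pi> ! k) * p (\<pi> ! k)
      else w (\<pi> ! k) * (completion_time p \<pi> k - d))"

definition optimal_schedule :: "'a set \<Rightarrow> ('a \<Rightarrow> real) \<Rightarrow> ('a \<Rightarrow> real) \<Rightarrow> real \<Rightarrow> 'a list \<Rightarrow> bool" where
  "optimal_schedule J p w d \<pi> \<longleftrightarrow> is_schedule J \<pi> \<and>
     (\<forall>\<sigma>. is_schedule J \<sigma> \<longrightarrow> cost p w d \<pi> \<le> cost p w d \<sigma>)"

definition wspt_order :: "('a \<Rightarrow> real) \<Rightarrow> ('a \<Rightarrow> real) \<Rightarrow> 'a list \<Rightarrow> bool" where
  "wspt_order p w \<pi> \<longleftrightarrow> sorted (map (\<lambda>j. p j / w j) \<pi>)"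

end

theory Submission
  imports Defs
begin

lemma insort_take_le:
  "sum_list (take (Suc k) (insort (x::real) zs)) \<le> x + sum_list (take k zs)"
proof (induction zs arbitrary: k)
  case Nil then show ?case by (cases k) auto
next
  case (Cons z zs)
  show ?case
  proof (cases "x \<le> z")
    case True then show ?thesis by simp
  next
    case False
    show ?thesis
    proof (cases k)
      case 0 then show ?thesis using False by simp
    next
      case (Suc k')
      then show ?thesis using False Cons.IH[of k'] by simp
    qed
  qed
qed

lemma sort_take_le:
  "sum_list (take k (sort (xs::real list))) \<le> sum_list (take k xs)"
proof (induction xs arbitrary: k)
  case Nil then show ?case by simp
next
  case (Cons x ys)
  show ?case
  proof (cases k)
    case 0 then show ?thesis by simp
  next
    case (Suc k')
    have "sum_list (take k (sort (x#ys))) \<le> x + sum_list (take k' (sort ys))"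
      using Suc insort_take_le by simp
    also have "\<dots> \<le> x + sum_list (take k' ys)" using Cons.IH[of k'] by simp
    finally show ?thesis using Suc by simp
  qed
qed

lemma cost_eq:
  assumes "is_schedule J \<pi>" "\<And>j. j \<in> J \<Longrightarrow> w j = c"
  shows "cost p w d \<pi> = c * (\<Sum>k<length \<pi>. p (\<pi>!k) + max 0 (start_time p \<pi> k - d))"
proof -
  have "cost p w d \<pi> = (\<Sum>k<length \<pi>. c * (p (\<pi>!k) + max 0 (start_time p \<pi> k - d)))"
    unfolding cost_def
  proof (rule sum.cong)
    fix k assume "k \<in> {..<length \<pi>}"
    then have "\<pi>!k \<in> J" using assms(1) unfolding is_schedule_def by auto
    then show "(if start_time p \<pi> k < d then w (\<pi> ! k) * p (\<pi> ! k)
      else w (\<pi> ! k) * (completion_time p \<pi> k - d)) =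
      c * (p (\<pi>!k) + max 0 (start_time p \<pi> k - d))"
      using assms(2) by (auto simp: completion_time_def algebra_simps max_def)
  qed simp
  then show ?thesis by (simp add: sum_distrib_left)
qed

lemma sum_p: "(\<Sum>k<length \<pi>. p (\<pi>!k)) = sum_list (map p \<pi>)"
  by (simp add: sum_list_sum_nth atLeast0LessThan)

theorem theorem2:
  fixes J :: "'a set" and p w :: "'a \<Rightarrow> real" and d :: real and \<pi> :: "'a list"
  assumes "finite J"
    and "\<And>j. j \<in> J \<Longrightarrow> p j > 0"
    and "\<And>j. j \<in> J \<Longrightarrow> w j > 0"
    and "d \<ge> 0"
    and "\<And>j k. j \<in> J \<Longrightarrow> k \<in> J \<Longrightarrow> w j = w k"
    and "is_schedule J \<pi>"
    and "wspt_order p w \<pi>"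
  shows "optimal_schedule J p w d \<pi>"
proof (cases "\<pi> = []")
  case True
  then have "J = {}" using assms(6) by (simp add: is_schedule_def)
  then show ?thesis using assms(6) True
    by (auto simp: optimal_schedule_def is_schedule_def cost_def)
next
  case False
  define c where "c = w (\<pi>!0)"
  have c0: "\<pi>!0 \<in> J" using False assms(6) by (auto simp: is_schedule_def)
  have wc: "\<And>j. j \<in> J \<Longrightarrow> w j = c" using assms(5) c0 unfolding c_def by metis
  have cpos: "c > 0" using assms(3) c0 unfolding c_def by blast
  have srt: "sorted (map p \<pi>)"
  proof -
    have eqm: "map (\<lambda>j. p j / w j) \<pi> = map (\<lambda>x. x / c) (map p \<pi>)"
      using wc assms(6) by (auto simp: is_schedule_def)
    then have "sorted (map (\<lambda>x. x / c) (map p \<pi>))"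
      using assms(7) eqm unfolding wspt_order_def by metis
    then show ?thesis using cpos
      by (auto simp: sorted_iff_nth_mono divide_right_mono_neg divide_le_cancel)
  qed
  show ?thesis unfolding optimal_schedule_def
  proof (intro conjI allI impI)
    show "is_schedule J \<pi>" by fact
    fix \<sigma> assume s: "is_schedule J \<sigma>"
    have ms: "mset \<pi> = mset \<sigma>" using s assms(6)
      unfolding is_schedule_def by (metis set_eq_iff_mset_eq_distinct)
    then have len: "length \<pi> = length \<sigma>" using mset_eq_length by blast
    have srt2: "map p \<pi> = sort (map p \<sigma>)"
      by (metis ms mset_map properties_for_sort srt)
    have sp: "sum_list (map p \<pi>) = sum_list (map p \<sigma>)"
      by (metis ms mset_map sum_mset_sum_list)
    have st: "start_time p \<pi> k \<le> start_time p \<sigma> k" for k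
      unfolding start_time_def
      using sort_take_le[of k "map p \<sigma>"] srt2 by (metis take_map)
    have "(\<Sum>k<length \<pi>. max 0 (start_time p \<pi> k - d)) \<le>
          (\<Sum>k<length \<sigma>. max 0 (start_time p \<sigma> k - d))"
      unfolding len[symmetric] by (rule sum_mono) (use st in \<open>smt (verit)\<close>)
    then show "cost p w d \<pi> \<le> cost p w d \<sigma>"
      using cost_eq[OF assms(6) wc] cost_eq[OF s wc] cpos sp sum_p[of p \<pi>] sum_p[of p \<sigma>]
      by (simp add: sum.distrib)
  qed
qed

end
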